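(* Let $f_1,\dots,f_M:\mathbb{R}\to[0,1]$ be cumulative distribution functions and $w_1,\dots,w_M\in\mathbb{R}$ real weights (not necessarily positive), and let $F(x)=\sum_{i=1}^M w_i f_i(x)$. For $1\le M'<M$ write $F(x)=F_{M'}(x)+R_{M'}(x)$ with $F_{M'}(x)=\sum_{i=1}^{M'} w_i f_i(x)$ and $R_{M'}(x)=\sum_{i=M'+1}^M w_i f_i(x)$, and set \[\epsilon_-=\sum_{i=M'+1}^M [w_i]_-\le 0,\qquad \epsilon_+=\sum_{i=M'+1}^M [w_i]_+\ge 0.\] Then for every $x$, $R_{M'}(x)\in[\epsilon_-,\epsilon_+]$. Moreover, assuming $F$ and $F_{M'}$ are continuous and strictly increasing with quantile functions $F^{-1}$, $F_{M'}^{-1}$, for $p\in(0,1)$ with $p+\epsilon_-,\,p+\epsilon_+\in(0,1)$, \[F^{-1}(p+\epsilon_-)\le F_{M'}^{-1}(p)\le F^{-1}(p+\epsilon_+).\]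
   Context: $[w]_+=\max(w,0)$ and $[w]_-=\min(w,0)$. For a continuous strictly increasing function $G$, $G^{-1}(q)$ denotes the unique $x$ with $G(x)=q$. Such mixtures with signed weights arise from sparse grid quadrature. *)

theory Defs
  imports Complex_Main
begin

definition is_cdf :: "(real \<Rightarrow> real) \<Rightarrow> bool" where
  "is_cdf f \<longleftrightarrow> mono f \<and> (\<forall>x. continuous (at_right x) f)
     \<and> (f \<longlongrightarrow> 0) at_bot \<and> (f \<longlongrightarrow> 1) at_top"

definition pos_part :: "real \<Rightarrow> real" where "pos_part w = max w 0"
definition neg_part :: "real \<Rightarrow> real" where "neg_part w = min w 0"

definition quantile :: "(real \<Rightarrow> real) \<Rightarrow> real \<Rightarrow> real" where
  "quantile G q = (THE x. G x = q)"

end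

theory Submission
  imports Defs
begin

lemma cdf_bounds:
  assumes "is_cdf f" shows "0 \<le> f x \<and> f x \<le> 1"
proof -
  have m: "mono f" and b: "(f \<longlongrightarrow> 0) at_bot" and t: "(f \<longlongrightarrow> 1) at_top"
    using assms unfolding is_cdf_def by auto
  have e1: "eventually (\<lambda>y. f x \<le> f y) at_top"
    using eventually_ge_at_top[of x] by eventually_elim (use m in \<open>auto simp: mono_def\<close>)
  have e2: "eventually (\<lambda>y. f y \<le> f x) at_bot"
    using eventually_le_at_bot[of x] by eventually_elim (use m in \<open>auto simp: mono_def\<close>)
  have "f x \<le> 1" using tendsto_le[OF trivial_limit_at_top_linorder t tendsto_const e1] .
  moreover have "0 \<le> f x" using tendsto_le[OF trivial_limit_at_bot_linorder tendsto_const b e2] .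
  ultimately show ?thesis by simp
qed

lemma quantile_eq:
  assumes "strict_mono G" "G x = q" shows "quantile G q = x"
  unfolding quantile_def
  using assms by (auto intro!: the_equality dest: strict_mono_eq)

lemma term_bounds:
  assumes "0 \<le> a" "a \<le> 1"
  shows "neg_part w \<le> w * a \<and> w * a \<le> pos_part w"
  using assms unfolding neg_part_def pos_part_def
  by (cases "w \<ge> 0") (auto simp: mult_le_one mult_left_le intro: mult_nonneg_nonneg
      simp add: mult_nonpos_nonneg mult_le_cancel_left1 mult_le_cancel_left2)

theorem proposition2:
  fixes f :: "nat \<Rightarrow> real \<Rightarrow> real" and w :: "nat \<Rightarrow> real" and M M' :: nat
  assumes cdf: "\<And>i. i \<in> {1..M} \<Longrightarrow> is_cdf (f i)"
    and M': "1 \<le> M'" "M' < M"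
  defines "F \<equiv> (\<lambda>x. \<Sum>i=1..M. w i * f i x)"
    and "FM \<equiv> (\<lambda>x. \<Sum>i=1..M'. w i * f i x)"
    and "R \<equiv> (\<lambda>x. \<Sum>i=M'+1..M. w i * f i x)"
    and "eps_minus \<equiv> (\<Sum>i=M'+1..M. neg_part (w i))"
    and "eps_plus \<equiv> (\<Sum>i=M'+1..M. pos_part (w i))"
  shows "(\<forall>x. F x = FM x + R x \<and> R x \<in> {eps_minus..eps_plus})
    \<and> ((continuous_on UNIV F \<and> strict_mono F \<and> continuous_on UNIV FM \<and> strict_mono FM) \<longrightarrow>
        (\<forall>p. p \<in> {0<..<1} \<and> p + eps_minus \<in> {0<..<1} \<and> p + eps_plus \<in> {0<..<1}
             \<and> p \<in> range FM \<and> p + eps_minus \<in> range F \<and> p + eps_plus \<in> range F \<longrightarrow>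
           quantile F (p + eps_minus) \<le> quantile FM p \<and> quantile FM p \<le> quantile F (p + eps_plus)))"

proof -
  have split: "F x = FM x + R x" for x
  proof -
    have "{1..M} = {1..M'} \<union> {M'+1..M}" using M' by auto
    then show ?thesis unfolding F_def FM_def R_def
      by (simp add: sum.union_disjoint[symmetric] ivl_disj_int)
  qed
  have Rb: "R x \<in> {eps_minus..eps_plus}" for x
  proof -
    have tb: "neg_part (w i) \<le> w i * f i x \<and> w i * f i x \<le> pos_part (w i)" if "i \<in> {M'+1..M}" for i
      using term_bounds cdf_bounds[OF cdf] that M' by auto
    show ?thesis unfolding R_def eps_minus_def eps_plus_def
      using sum_mono[of "{M'+1..M}" "\<lambda>i. neg_part (w i)" "\<lambda>i. w i * f i x"]
        sum_mono[of "{M'+1..M}" "\<lambda>i. w i * f i x" "\<lambda>i. pos_part (w i)"] tb by auto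
  qed
  show ?thesis
  proof (intro conjI allI impI)
    fix x show "F x = FM x + R x" by (rule split)
    show "R x \<in> {eps_minus..eps_plus}" by (rule Rb)
  next
    fix p assume H: "continuous_on UNIV F \<and> strict_mono F \<and> continuous_on UNIV FM \<and> strict_mono FM"
      and P: "p \<in> {0<..<1} \<and> p + eps_minus \<in> {0<..<1} \<and> p + eps_plus \<in> {0<..<1}
             \<and> p \<in> range FM \<and> p + eps_minus \<in> range F \<and> p + eps_plus \<in> range F"
    obtain x where x: "FM x = p" using P by auto
    obtain y where y: "F y = p + eps_minus" using P by (metis rangeE)
    obtain z where z: "F z = p + eps_plus" using P by (metis rangeE)
    have qx: "quantile FM p = x" using quantile_eq H x by blast
    have qy: "quantile F (p + eps_minus) = y" using quantile_eq H y by blast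
    have qz: "quantile F (p + eps_plus) = z" using quantile_eq H z by blast
    have Fx: "F y \<le> F x" "F x \<le> F z" using split[of x] Rb[of x] x y z by auto
    have sm: "strict_mono F" using H by auto
    have "y \<le> x" using Fx(1) sm by (metis not_le strict_monoD)
    moreover have "x \<le> z" using Fx(2) sm by (metis not_le strict_monoD)
    ultimately show "quantile F (p + eps_minus) \<le> quantile FM p"
      "quantile FM p \<le> quantile F (p + eps_plus)" using qx qy qz by auto
  qed
qed

end
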